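(* Let $N\ge3$ be an integer, $p>(N+2)/(N-2)$, $b>0$, $\lambda>0$, and suppose the problem $u''+\frac{N-1}{r}u'+\lambda u+u^p=0$ on $(0,b)$, $u'(0)=u(b)=0$, has a positive solution $u_0$. Let $\phi$ be the solution of $\phi''+\frac{N-1}{r}\phi'+\lambda\phi=0$ for $r>0$, $\phi(0)=1$, $\phi'(0)=0$. Then $\phi(r)>0$ for all $r\in[0,b]$.
   Context: A positive solution means $u_0(r)>0$ for $r\in[0,b)$. *)

theory Defs
  imports "HOL-Analysis.Analysis"
begin

definition positive_solution ::
  "nat \<Rightarrow> real \<Rightarrow> real \<Rightarrow> real \<Rightarrow> (real \<Rightarrow> real) \<Rightarrow> (real \<Rightarrow> real) \<Rightarrow> (real \<Rightarrow> real) \<Rightarrow> bool"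
where
  "positive_solution N p lam b u du ddu \<longleftrightarrow>
     continuous_on {0..b} u \<and>
     (\<forall>r\<in>{0..<b}. (u has_real_derivative du r) (at r within {0..<b})) \<and>
     continuous_on {0..<b} du \<and>
     (\<forall>r\<in>{0<..<b}. (du has_real_derivative ddu r) (at r)) \<and>
     (\<forall>r\<in>{0<..<b}. ddu r + (real N - 1) / r * du r + lam * u r + u r powr p = 0) \<and>
     du 0 = 0 \<and> u b = 0 \<and>
     (\<forall>r\<in>{0..<b}. u r > 0)"

definition linear_solution ::
  "nat \<Rightarrow> real \<Rightarrow> (real \<Rightarrow> real) \<Rightarrow> (real \<Rightarrow> real) \<Rightarrow> (real \<Rightarrow> real) \<Rightarrow> bool"
where
  "linear_solution N lam phi dphi ddphi \<longleftrightarrow>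
     (\<forall>r\<in>{0..}. (phi has_real_derivative dphi r) (at r within {0..})) \<and>
     continuous_on {0..} dphi \<and>
     (\<forall>r\<in>{0<..}. (dphi has_real_derivative ddphi r) (at r)) \<and>
     (\<forall>r\<in>{0<..}. ddphi r + (real N - 1) / r * dphi r + lam * phi r = 0) \<and>
     phi 0 = 1 \<and> dphi 0 = 0"

end

theory Submission
  imports Defs
begin

lemma mvt_real:
  fixes f f' :: "real \<Rightarrow> real"
  assumes "a < b" "continuous_on {a..b} f"
    "\<And>x. a < x \<Longrightarrow> x < b \<Longrightarrow> (f has_real_derivative f' x) (at x)"
  shows "\<exists>\<xi>. a < \<xi> \<and> \<xi> < b \<and> f b - f a = f' \<xi> * (b - a)"
proof -
  obtain \<xi> where "a < \<xi>" "\<xi> < b" "f b - f a = (\<lambda>h. f' \<xi> * h) (b - a)"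
    using mvt[OF assms(1,2), of "\<lambda>x h. f' x * h"] assms(3)
    by (metis has_field_derivative_imp_has_derivative)
  then show ?thesis by auto
qed

theorem lemma2p1:
  fixes N :: nat and p b lam :: real
    and u du ddu phi dphi ddphi :: "real \<Rightarrow> real"
  assumes "N \<ge> 3"
    and "p > (real N + 2) / (real N - 2)"
    and "b > 0" and "lam > 0"
    and "positive_solution N p lam b u du ddu"
    and "linear_solution N lam phi dphi ddphi"
  shows "\<forall>r\<in>{0..b}. phi r > 0"
proof -
  note N = assms(1) and bpos = assms(3) and lpos = assms(4)
  from assms(5) have uc: "continuous_on {0..b} u"
    and ud: "\<forall>r\<in>{0..<b}. (u has_real_derivative du r) (at r within {0..<b})"
    and duc: "continuous_on {0..<b} du"
    and udd: "\<forall>r\<in>{0<..<b}. (du has_real_derivative ddu r) (at r)"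
    and ueq: "\<forall>r\<in>{0<..<b}. ddu r + (real N - 1) / r * du r + lam * u r + u r powr p = 0"
    and ub: "u b = 0" and upos: "\<forall>r\<in>{0..<b}. u r > 0"
    unfolding positive_solution_def by auto
  from assms(6) have pd: "\<forall>r\<in>{0..}. (phi has_real_derivative dphi r) (at r within {0..})"
    and dpc: "continuous_on {0..} dphi"
    and pdd: "\<forall>r\<in>{0<..}. (dphi has_real_derivative ddphi r) (at r)"
    and peq: "\<forall>r\<in>{0<..}. ddphi r + (real N - 1) / r * dphi r + lam * phi r = 0"
    and p0: "phi 0 = 1"
    unfolding linear_solution_def by auto
  have ppos: "p > 0"
  proof -
    have "real N - 2 > 0" using N by simp
    then have "(real N + 2) / (real N - 2) > 0" by simp
    then show ?thesis using assms(2) by linarith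
  qed
  have phic: "continuous_on {0..} phi"
    by (rule DERIV_continuous_on) (use pd in auto)
  have ud': "(u has_real_derivative du r) (at r)" if "0 < r" "r < b" for r
  proof -
    have "(u has_real_derivative du r) (at r within {0..<b})" using ud that by simp
    then have "(u has_real_derivative du r) (at r within {0<..<b})"
      by (rule has_field_derivative_subset) auto
    then show ?thesis using that by (subst (asm) at_within_open) auto
  qed
  have pd': "(phi has_real_derivative dphi r) (at r)" if "0 < r" for r
  proof -
    have "(phi has_real_derivative dphi r) (at r within {0..})" using pd that by simp
    then have "(phi has_real_derivative dphi r) (at r within {0<..})"
      by (rule has_field_derivative_subset) auto
    then show ?thesis using that by (subst (asm) at_within_open) auto
  qed
  obtain x0 where "x0 \<in> {0..b}" and M0: "\<forall>y\<in>{0..b}. u y \<le> u x0"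
    using continuous_attains_sup[OF compact_Icc _ uc] bpos by auto
  define M where "M = u x0"
  have M: "\<forall>r\<in>{0..b}. u r \<le> M" using M0 M_def by auto
  have Mpos: "M > 0"
  proof -
    have "u 0 > 0" using upos bpos by simp
    moreover have "u 0 \<le> M" using M bpos by simp
    ultimately show ?thesis by linarith
  qed
  define B where "B = b^(N-1) * (lam*M + M powr p)"
  have B0: "B \<ge> 0" unfolding B_def using bpos lpos Mpos by simp
  define F where "F r = r^(N-1) * du r" for r
  have pw: "r^(N-1) = r * r^(N-1-1)" for r :: real
  proof -
    have "N - 1 = Suc (N-1-1)" using N by simp
    then show ?thesis by (metis power_Suc)
  qed
  have Fd: "(F has_real_derivative (- (r^(N-1) * (lam * u r + u r powr p)))) (at r)"
    if "0 < r" "r < b" for r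
  proof -
    have "(F has_real_derivative (real (N-1) * r^(N-1-1) * du r + r^(N-1) * ddu r)) (at r)"
      unfolding F_def using udd that
      by (auto intro!: derivative_eq_intros)
    moreover have "real (N-1) * r^(N-1-1) * du r + r^(N-1) * ddu r = - (r^(N-1) * (lam * u r + u r powr p))"
    proof -
      have e: "ddu r = - ((real N - 1) / r * du r) - lam * u r - u r powr p"
      proof -
        have "ddu r + (real N - 1) / r * du r + lam * u r + u r powr p = 0" using ueq that by simp
        then show ?thesis by linarith
      qed
      have "real (N-1) = real N - 1" using N by simp
      then show ?thesis unfolding e pw using that by (simp add: field_simps)
    qed
    ultimately show ?thesis by simp
  qed
  have F0: "F 0 = 0" unfolding F_def using N by simp
  have Fc: "continuous_on {0..r} F" if "r < b" for r
    unfolding F_def using that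
    by (intro continuous_intros continuous_on_subset[OF duc]) auto
  have Fb: "F r \<ge> -B*b" if rge: "0 \<le> r" and rlt: "r < b" for r
  proof (cases "r = 0")
    case True then show ?thesis using F0 B0 bpos by simp
  next
    case False
    then have r0: "0 < r" using rge rlt by simp
    obtain \<xi> where xi: "0 < \<xi>" "\<xi> < r"
      "F r - F 0 = (- (\<xi>^(N-1) * (lam * u \<xi> + u \<xi> powr p))) * (r - 0)"
      using mvt_real[OF r0 Fc[OF rlt], of "\<lambda>\<xi>. - (\<xi>^(N-1) * (lam * u \<xi> + u \<xi> powr p))"]
        Fd rge rlt by auto
    have uxi: "0 < u \<xi>" "u \<xi> \<le> M" using upos M xi rge rlt by auto
    have "\<xi>^(N-1) \<le> b^(N-1)" using xi rge rlt by (intro power_mono) auto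
    moreover have "lam * u \<xi> + u \<xi> powr p \<le> lam*M + M powr p"
      using uxi lpos ppos by (intro add_mono powr_mono2) auto
    ultimately have "\<xi>^(N-1) * (lam * u \<xi> + u \<xi> powr p) \<le> B"
      unfolding B_def using uxi xi lpos bpos by (intro mult_mono) auto
    then have "F r \<ge> -B * r" using xi F0 r0 by (simp add: mult_right_mono)
    moreover have "-B*r \<ge> -B*b" using B0 rge rlt by (simp add: mult_left_mono)
    ultimately show ?thesis by linarith
  qed
  define W where "W r = F r * phi r - r^(N-1) * u r * dphi r" for r
  show ?thesis
  proof (rule ccontr)
    assume "\<not> ?thesis"
    then obtain r0 where r0: "r0 \<in> {0..b}" "phi r0 \<le> 0" by force
    define S where "S = {r \<in> {0..b}. phi r \<le> (\<lambda>_. 0) r}"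
    have "closed S" unfolding S_def
      by (rule continuous_on_closed_Collect_le)
        (auto intro: continuous_on_subset[OF phic])
    moreover have "bounded S" unfolding S_def by (rule bounded_subset[OF compact_imp_bounded[OF compact_Icc]]) auto
    ultimately have "compact S" by (simp add: compact_eq_bounded_closed)
    moreover have "S \<noteq> {}" using r0 unfolding S_def by auto
    ultimately obtain c where cS: "c \<in> S" and cmin: "\<forall>t\<in>S. c \<le> t"
      using compact_attains_inf by blast
    have cb: "0 \<le> c" "c \<le> b" "phi c \<le> 0" using cS unfolding S_def by auto
    have c0: "c > 0" using cb p0 by (metis less_eq_real_def not_one_le_zero)
    have phipos: "phi r > 0" if "0 \<le> r" "r < c" for r
      using cmin that cb unfolding S_def by force
    have Wd: "(W has_real_derivative (-(r^(N-1) * phi r * u r powr p))) (at r)"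
      if "0 < r" "r < c" for r
    proof -
      have rb: "r < b" using that cb by simp
      have "(W has_real_derivative
          ((- (r^(N-1) * (lam * u r + u r powr p))) * phi r + F r * dphi r
           - ((real (N-1) * r^(N-1-1) * u r + r^(N-1) * du r) * dphi r + r^(N-1) * u r * ddphi r))) (at r)"
        unfolding W_def using Fd[OF that(1) rb] pd'[OF that(1)] ud'[OF that(1) rb] pdd that
        by (auto intro!: derivative_eq_intros)
      moreover have "(- (r^(N-1) * (lam * u r + u r powr p))) * phi r + F r * dphi r
           - ((real (N-1) * r^(N-1-1) * u r + r^(N-1) * du r) * dphi r + r^(N-1) * u r * ddphi r)
           = -(r^(N-1) * phi r * u r powr p)"
      proof -
        have e: "ddphi r = - ((real N - 1) / r * dphi r) - lam * phi r"
        proof -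
          have "ddphi r + (real N - 1) / r * dphi r + lam * phi r = 0" using peq that by simp
          then show ?thesis by linarith
        qed
        have "real (N-1) = real N - 1" using N by simp
        then show ?thesis unfolding e pw F_def using that by (simp add: field_simps)
      qed
      ultimately show ?thesis by simp
    qed
    have Wc: "continuous_on {0..t} W" if "t < c" for t
    proof -
      have tb: "t < b" using that cb by simp
      have "continuous_on {0..t} F" using Fc[OF tb] .
      moreover have "continuous_on {0..t} phi" by (rule continuous_on_subset[OF phic]) auto
      moreover have "continuous_on {0..t} u" by (rule continuous_on_subset[OF uc]) (use tb in auto)
      moreover have "continuous_on {0..t} dphi" by (rule continuous_on_subset[OF dpc]) auto
      ultimately show ?thesis unfolding W_def by (intro continuous_intros) auto
    qed
    have Wdec: "W t < W s" if hs: "0 \<le> s" and hst: "s < t" and htc: "t < c" for s t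
    proof -
      have cont: "continuous_on {s..t} W" by (rule continuous_on_subset[OF Wc[OF htc]]) (use hs in auto)
      have der: "(W has_real_derivative (-(x^(N-1) * phi x * u x powr p))) (at x)"
        if "s < x" "x < t" for x
        using Wd[of x] that hs htc by linarith
      obtain \<xi> where xi: "s < \<xi>" "\<xi> < t"
        "W t - W s = (-(\<xi>^(N-1) * phi \<xi> * u \<xi> powr p)) * (t - s)"
        using mvt_real[OF hst cont der] by blast
      have "phi \<xi> > 0" using phipos xi hs htc by auto
      moreover have "u \<xi> > 0" using upos xi hs htc cb by auto
      ultimately have pos: "\<xi>^(N-1) * phi \<xi> * u \<xi> powr p > 0" using xi hs by simp
      have "(\<xi>^(N-1) * phi \<xi> * u \<xi> powr p) * (t - s) > 0" using pos hst by simp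
      then show ?thesis using xi(3) by (simp add: algebra_simps)
    qed
    have W0: "W 0 = 0" unfolding W_def using F0 N by simp
    have Wh: "W (c/2) < 0" using Wdec[of 0 "c/2"] W0 c0 by simp
    have ev: "eventually (\<lambda>r. r \<in> {c/2<..<c}) (at_left c)"
      by (rule eventually_at_left_real) (use c0 in simp)
    define h where "h r = -B*b*phi r - r^(N-1)*u r*dphi r" for r
    have hle: "eventually (\<lambda>r. h r \<le> W (c/2)) (at_left c)"
    proof (rule eventually_mono[OF ev])
      fix r assume r: "r \<in> {c/2<..<c}"
      have "W r \<le> W (c/2)" using Wdec[of "c/2" r] r c0 by auto
      moreover have "F r * phi r \<ge> -B*b * phi r"
        using Fb[of r] r c0 cb phipos[of r] by (intro mult_right_mono) auto
      ultimately show "h r \<le> W (c/2)" unfolding h_def W_def by linarith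
    qed
    have hc: "continuous_on {0..c} h"
    proof -
      have "continuous_on {0..c} phi" by (rule continuous_on_subset[OF phic]) auto
      moreover have "continuous_on {0..c} u" by (rule continuous_on_subset[OF uc]) (use cb in auto)
      moreover have "continuous_on {0..c} dphi" by (rule continuous_on_subset[OF dpc]) auto
      ultimately show ?thesis unfolding h_def by (intro continuous_intros) auto
    qed
    have hlim: "(h \<longlongrightarrow> h c) (at_left c)" using continuous_on_Icc_at_leftD[OF hc c0] .
    have "h c \<le> W (c/2)"
      by (rule tendsto_upperbound[OF hlim hle]) simp
    moreover have "dphi c \<le> 0"
    proof -
      have "(phi has_real_derivative dphi c) (at c within {0..})" using pd cb by simp
      then have "(phi has_real_derivative dphi c) (at c within {0..c})"
        by (rule has_field_derivative_subset) auto
      then have lim: "((\<lambda>y. (phi y - phi c) / (y - c)) \<longlongrightarrow> dphi c) (at_left c)"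
        using has_field_derivative_iff at_within_Icc_at_left[OF c0] by metis
      have "eventually (\<lambda>y. (phi y - phi c) / (y - c) \<le> 0) (at_left c)"
      proof (rule eventually_mono[OF ev])
        fix y assume y: "y \<in> {c/2<..<c}"
        then have "phi y > 0" using phipos c0 by auto
        then show "(phi y - phi c) / (y - c) \<le> 0" using y cb
          by (intro divide_nonneg_neg) auto
      qed
      then show ?thesis by (rule tendsto_upperbound[OF lim]) simp
    qed
    moreover have "u c \<ge> 0" using upos ub cb by (cases "c = b") (auto simp: less_imp_le)
    ultimately have "h c \<ge> 0"
    proof -
      assume dc: "dphi c \<le> 0" and uc0: "u c \<ge> 0"
      have "c^(N-1) * u c \<ge> 0" using uc0 cb by simp
      then have t1: "c^(N-1) * u c * dphi c \<le> 0" using dc by (simp add: mult_nonneg_nonpos)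
      have "B*b \<ge> 0" using B0 bpos by simp
      then have t2: "B*b*phi c \<le> 0" using cb by (simp add: mult_nonneg_nonpos)
      show ?thesis unfolding h_def using t1 t2 by linarith
    qed
    then show False using \<open>h c \<le> W (c/2)\<close> Wh by linarith
  qed
qed

end
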